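(* Let $\Sigma$ be a non-empty finite alphabet and $L \subseteq \Sigma^*$ a commutative group language over $\Sigma$. Then for every $\Gamma \subseteq \Sigma$, the language $\pi_\Gamma(L)$ is a commutative group language over the alphabet $\Gamma$.
   Context: $L$ is commutative if for every $w \in L$, every word $u$ with $|u|_a = |w|_a$ for all letters $a$ also lies in $L$. A group language over an alphabet $\Delta$ is a language recognized by a permutation automaton over $\Delta$, i.e. a complete deterministic finite automaton $(\Delta,Q,\delta,q_0,F)$ in which each letter acts as a permutation of $Q$; by convention, for $\Delta = \emptyset$ the group languages over $\Delta$ are exactly $\emptyset$ and $\{\varepsilon\}$. For $\Gamma \subseteq \Sigma$, $\pi_\Gamma : \Sigma^* \to \Gamma^*$ is the homomorphism with $\pi_\Gamma(x) = x$ for $x \in \Gamma$ and $\pi_\Gamma(x) = \varepsilon$ otherwise, applied elementwise to languages. *)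

theory Defs
  imports Main
begin

definition commutative_lang :: "'a list set \<Rightarrow> bool" where
  "commutative_lang L \<longleftrightarrow>
     (\<forall>w \<in> L. \<forall>u. (\<forall>a. count_list u a = count_list w a) \<longrightarrow> u \<in> L)"

text \<open>Permutation automaton over \<open>\<Delta>\<close>: finite nonempty state set \<open>Q\<close> (states encoded as
  natural numbers, which is no loss of generality for finite automata), complete deterministic
  transition function, every letter acting as a permutation of \<open>Q\<close>.\<close>

definition perm_automaton :: "'a set \<Rightarrow> nat set \<Rightarrow> (nat \<Rightarrow> 'a \<Rightarrow> nat) \<Rightarrow> nat \<Rightarrow> nat set \<Rightarrow> bool" where
  "perm_automaton \<Delta> Q \<delta> q0 F \<longleftrightarrow>
     finite Q \<and> q0 \<in> Q \<and> F \<subseteq> Q \<and>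
     (\<forall>a \<in> \<Delta>. bij_betw (\<lambda>q. \<delta> q a) Q Q)"

definition accepted_lang :: "'a set \<Rightarrow> (nat \<Rightarrow> 'a \<Rightarrow> nat) \<Rightarrow> nat \<Rightarrow> nat set \<Rightarrow> 'a list set" where
  "accepted_lang \<Delta> \<delta> q0 F = {w \<in> lists \<Delta>. foldl \<delta> q0 w \<in> F}"

definition group_lang :: "'a set \<Rightarrow> 'a list set \<Rightarrow> bool" where
  "group_lang \<Delta> L \<longleftrightarrow>
     (if \<Delta> = {} then L = {} \<or> L = {[]}
      else (\<exists>Q \<delta> q0 F. perm_automaton \<Delta> Q \<delta> q0 F \<and> L = accepted_lang \<Delta> \<delta> q0 F))"

definition proj :: "'a set \<Rightarrow> 'a list \<Rightarrow> 'a list" where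
  "proj \<Gamma> w = filter (\<lambda>x. x \<in> \<Gamma>) w"

end

theory Submission imports Defs "HOL-Library.FuncSet" begin

lemma foldl_in:
  assumes "\<forall>a\<in>\<Delta>. bij_betw (\<lambda>q. \<delta> q a) Q Q" "q \<in> Q" "w \<in> lists \<Delta>"
  shows "foldl \<delta> q w \<in> Q"
  using assms(2,3)
proof (induction w arbitrary: q)
  case (Cons a w)
  then have "\<delta> q a \<in> Q" using assms(1) bij_betwE by fastforce
  then show ?case using Cons by simp
qed simp

lemma transfer_nat:
  fixes \<delta>' :: "'b \<Rightarrow> 'a \<Rightarrow> 'b"
  assumes fin: "finite Q'" and q0: "q0' \<in> Q'" and F: "F' \<subseteq> Q'"
    and bij: "\<forall>a\<in>\<Delta>. bij_betw (\<lambda>q. \<delta>' q a) Q' Q'"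
  shows "\<exists>Q \<delta> q0 F. perm_automaton \<Delta> Q \<delta> q0 F \<and>
           accepted_lang \<Delta> \<delta> q0 F = {w \<in> lists \<Delta>. foldl \<delta>' q0' w \<in> F'}"
proof -
  obtain h where h: "bij_betw h {0..<card Q'} Q'" using ex_bij_betw_nat_finite[OF fin] by blast
  define Q where "Q = {0..<card Q'}"
  define g where "g = inv_into Q h"
  have g: "bij_betw g Q' Q" using h bij_betw_inv_into unfolding g_def Q_def by blast
  have hg: "\<And>x. x \<in> Q' \<Longrightarrow> h (g x) = x" using h unfolding g_def Q_def
    by (meson bij_betw_inv_into_right)
  have gh: "\<And>x. x \<in> Q \<Longrightarrow> g (h x) = x" using h unfolding g_def Q_def
    by (meson bij_betw_inv_into_left)
  define \<delta> where "\<delta> = (\<lambda>q a. g (\<delta>' (h q) a))"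
  have bijd: "\<forall>a\<in>\<Delta>. bij_betw (\<lambda>q. \<delta> q a) Q Q"
  proof
    fix a assume a: "a \<in> \<Delta>"
    have "bij_betw (g \<circ> (\<lambda>q. \<delta>' q a) \<circ> h) Q Q"
      using h g bij a unfolding Q_def by (meson bij_betw_trans)
    then show "bij_betw (\<lambda>q. \<delta> q a) Q Q" unfolding \<delta>_def by (simp add: comp_def)
  qed
  have fl: "\<And>q w. q \<in> Q \<Longrightarrow> w \<in> lists \<Delta> \<Longrightarrow> h (foldl \<delta> q w) = foldl \<delta>' (h q) w"
  proof -
    fix q w assume "q \<in> Q" "w \<in> lists \<Delta>"
    then show "h (foldl \<delta> q w) = foldl \<delta>' (h q) w"
    proof (induction w arbitrary: q)
      case (Cons a w)
      have hq: "h q \<in> Q'" using Cons.prems h unfolding Q_def using bij_betwE by blast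
      have "\<delta>' (h q) a \<in> Q'" using bij Cons.prems hq bij_betwE by fastforce
      then have e: "h (\<delta> q a) = \<delta>' (h q) a" unfolding \<delta>_def using hg by simp
      have "\<delta> q a \<in> Q" using bijd Cons.prems bij_betwE by fastforce
      then show ?case using Cons e by simp
    qed simp
  qed
  have q0Q: "g q0' \<in> Q" using g q0 bij_betwE by blast
  have "perm_automaton \<Delta> Q \<delta> (g q0') (g ` F')"
    unfolding perm_automaton_def Q_def using q0Q F g bijd unfolding Q_def
    by (auto dest: bij_betwE)
  moreover have "accepted_lang \<Delta> \<delta> (g q0') (g ` F') = {w \<in> lists \<Delta>. foldl \<delta>' q0' w \<in> F'}"
  proof -
    have "foldl \<delta> (g q0') w \<in> g ` F' \<longleftrightarrow> foldl \<delta>' q0' w \<in> F'" if w: "w \<in> lists \<Delta>" for w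
    proof -
      have inQ: "foldl \<delta> (g q0') w \<in> Q" using foldl_in[OF bijd q0Q w] .
      have e: "h (foldl \<delta> (g q0') w) = foldl \<delta>' q0' w" using fl[OF q0Q w] hg q0 by simp
      show ?thesis
      proof
        assume "foldl \<delta> (g q0') w \<in> g ` F'"
        then obtain y where "y \<in> F'" "foldl \<delta> (g q0') w = g y" by blast
        then show "foldl \<delta>' q0' w \<in> F'" using e hg F by auto
      next
        assume "foldl \<delta>' q0' w \<in> F'"
        then show "foldl \<delta> (g q0') w \<in> g ` F'" using e[symmetric] gh[OF inQ] by (metis image_eqI)
      qed
    qed
    then show ?thesis unfolding accepted_lang_def by auto
  qed
  ultimately show ?thesis by blast
qed

lemma period_one:
  assumes "finite Q" "bij_betw p Q Q"
  shows "\<exists>n>0. \<forall>q\<in>Q. (p ^^ n) q = q"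
proof -
  define R where "R = (\<lambda>k::nat. restrict (p ^^ k) Q)"
  have bk: "\<And>k. bij_betw (p ^^ k) Q Q" using assms(2) by (rule bij_betw_funpow)
  have "R ` UNIV \<subseteq> PiE Q (\<lambda>_. Q)"
    unfolding R_def using bk bij_betwE by (auto simp: PiE_iff) blast
  moreover have "finite (PiE Q (\<lambda>_. Q))" using assms(1) by (simp add: finite_PiE)
  ultimately have "finite (R ` UNIV)" by (rule finite_subset)
  then have "\<not> inj_on R UNIV" using finite_imageD infinite_UNIV_nat by blast
  then obtain x y where xy: "x \<noteq> y" "R x = R y" unfolding inj_on_def by blast
  obtain i j where ij: "i < j" "R i = R j"
  proof (cases "x < y")
    case True then show ?thesis using that xy by blast
  next
    case False then have "y < x" using xy(1) by simp
    then show ?thesis using that xy by metis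
  qed
  have "\<forall>q\<in>Q. (p ^^ (j - i)) q = q"
  proof
    fix q assume q: "q \<in> Q"
    have "(p ^^ i) ((p ^^ (j - i)) q) = (p ^^ j) q"
      using ij(1) by (metis funpow_add le_add_diff_inverse less_imp_le_nat o_apply)
    also have "... = (p ^^ i) q" using ij(2) q unfolding R_def by (metis restrict_apply')
    finally have e: "(p ^^ i) ((p ^^ (j - i)) q) = (p ^^ i) q" .
    have "(p ^^ (j - i)) q \<in> Q" using bk q bij_betwE by blast
    moreover have "inj_on (p ^^ i) Q" using bk bij_betw_def by blast
    ultimately show "(p ^^ (j - i)) q = q" using e q inj_on_def by metis
  qed
  then show ?thesis using ij(1) by (metis zero_less_diff)
qed

lemma funpow_period_mult:
  assumes "\<forall>q\<in>Q. (p ^^ n) q = q"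
  shows "\<forall>q\<in>Q. (p ^^ (n * k)) q = q"
proof (induction k)
  case (Suc k)
  then show ?case using assms by (simp add: funpow_add)
qed simp

lemma period_all:
  assumes "finite Q" "finite \<Sigma>" "\<forall>a\<in>\<Sigma>. bij_betw (\<lambda>q. \<delta> q a) Q Q"
  shows "\<exists>N>0. \<forall>a\<in>\<Sigma>. \<forall>q\<in>Q. ((\<lambda>q. \<delta> q a) ^^ N) q = q"
proof -
  have "\<forall>a\<in>\<Sigma>. \<exists>n>0. \<forall>q\<in>Q. ((\<lambda>q. \<delta> q a) ^^ n) q = q"
    using assms period_one by blast
  then obtain n where n: "\<forall>a\<in>\<Sigma>. n a > 0 \<and> (\<forall>q\<in>Q. ((\<lambda>q. \<delta> q a) ^^ n a) q = q)"
    by metis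
  define N where "N = prod n \<Sigma>"
  have "N > 0" unfolding N_def using n by (simp add: prod_pos)
  moreover have "\<forall>a\<in>\<Sigma>. \<forall>q\<in>Q. ((\<lambda>q. \<delta> q a) ^^ N) q = q"
  proof (intro ballI)
    fix a q assume a: "a \<in> \<Sigma>" and q: "q \<in> Q"
    have "n a dvd N" unfolding N_def using a assms(2) by (simp add: dvd_prodI)
    then obtain k where "N = n a * k" by blast
    then show "((\<lambda>q. \<delta> q a) ^^ N) q = q" using funpow_period_mult n a q by metis
  qed
  ultimately show ?thesis by blast
qed

definition pad :: "nat \<Rightarrow> ('a \<Rightarrow> nat) \<Rightarrow> 'a list \<Rightarrow> 'a list" where
  "pad N c as = concat (map (\<lambda>a. replicate (N * c a) a) as)"

lemma count_replicate: "count_list (replicate n a) b = (if a = b then n else 0)"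
  by (induction n) auto

lemma count_pad: "distinct as \<Longrightarrow> count_list (pad N c as) b = (if b \<in> set as then N * c b else 0)"
  unfolding pad_def by (induction as) (auto simp: count_replicate)

lemma pad_lists: "set as \<subseteq> \<Sigma> \<Longrightarrow> pad N c as \<in> lists \<Sigma>"
  unfolding pad_def by auto

lemma foldl_replicate: "foldl \<delta> q (replicate n a) = ((\<lambda>q. \<delta> q a) ^^ n) q"
  by (induction n arbitrary: q) (simp_all add: funpow_Suc_right del: funpow.simps(2))

lemma foldl_pad:
  assumes per: "\<forall>a\<in>\<Sigma>. \<forall>q\<in>Q. ((\<lambda>q. \<delta> q a) ^^ N) q = q"
    and "set as \<subseteq> \<Sigma>" "q \<in> Q"
  shows "foldl \<delta> q (pad N c as) = q"
  using assms(2,3) unfolding pad_def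
proof (induction as)
  case (Cons a as)
  have "foldl \<delta> q (replicate (N * c a) a) = q"
    using funpow_period_mult[where Q=Q and p="\<lambda>q. \<delta> q a" and n=N and k="c a"] per Cons.prems
    by (simp add: foldl_replicate)
  then show ?case using Cons by simp
qed simp

lemma count_filter: "count_list (filter P w) a = (if P a then count_list w a else 0)"
  by (induction w) auto

lemma key:
  assumes pa: "perm_automaton \<Sigma> Q \<delta> q0 F" and fin: "finite \<Sigma>"
    and per: "\<forall>a\<in>\<Sigma>. \<forall>q\<in>Q. ((\<lambda>q. \<delta> q a) ^^ N) q = q"
    and com: "commutative_lang (accepted_lang \<Sigma> \<delta> q0 F)"
    and w: "w \<in> accepted_lang \<Sigma> \<delta> q0 F" and v: "v \<in> lists \<Sigma>"
    and cnt: "\<forall>a. count_list v a mod N = count_list w a mod N"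
  shows "v \<in> accepted_lang \<Sigma> \<delta> q0 F"
proof -
  obtain as where as: "set as = \<Sigma>" "distinct as" using finite_distinct_list[OF fin] by blast
  have bij: "\<forall>a\<in>\<Sigma>. bij_betw (\<lambda>q. \<delta> q a) Q Q" and q0: "q0 \<in> Q"
    using pa unfolding perm_automaton_def by auto
  have wl: "w \<in> lists \<Sigma>" and wF: "foldl \<delta> q0 w \<in> F" using w unfolding accepted_lang_def by auto
  define y1 where "y1 = w @ pad N (\<lambda>a. count_list v a div N) as"
  define y2 where "y2 = v @ pad N (\<lambda>a. count_list w a div N) as"
  have y1l: "y1 \<in> lists \<Sigma>" unfolding y1_def using wl pad_lists[of as \<Sigma>] as by auto
  have "foldl \<delta> q0 y1 = foldl \<delta> q0 w" unfolding y1_def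
    using foldl_pad[OF per] as foldl_in[OF bij q0 wl] by simp
  then have "y1 \<in> accepted_lang \<Sigma> \<delta> q0 F" using y1l wF unfolding accepted_lang_def by simp
  moreover have "\<forall>a. count_list y2 a = count_list y1 a"
  proof
    fix a
    show "count_list y2 a = count_list y1 a"
    proof (cases "a \<in> \<Sigma>")
      case True
      have "count_list w a + N * (count_list v a div N) = count_list v a + N * (count_list w a div N)"
        using cnt[rule_format, of a] by (metis add.commute add.left_commute div_mult_mod_eq mult.commute)
      then show ?thesis unfolding y1_def y2_def using True as by (simp add: count_pad)
    next
      case False
      then have "a \<notin> set v" "a \<notin> set w" using v wl by auto
      then show ?thesis unfolding y1_def y2_def using False as by (simp add: count_pad)
    qed
  qed
  ultimately have y2: "y2 \<in> accepted_lang \<Sigma> \<delta> q0 F" using com unfolding commutative_lang_def by blast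
  have "foldl \<delta> q0 y2 = foldl \<delta> q0 v" unfolding y2_def
    using foldl_pad[OF per] as foldl_in[OF bij q0 v] by simp
  then show ?thesis using y2 v unfolding accepted_lang_def by simp
qed

lemma mod_inv1: "x < (N::nat) \<Longrightarrow> (Suc x mod N + N - 1) mod N = x"
proof (cases "Suc x = N")
  case True then show ?thesis by simp
next
  case False
  assume "x < N"
  then have "Suc x < N" using False by simp
  then have "Suc x mod N + N - 1 = x + N" by simp
  then show ?thesis using \<open>x < N\<close> by simp
qed

lemma mod_inv2: "x < (N::nat) \<Longrightarrow> Suc ((x + N - 1) mod N) mod N = x"
proof (cases x)
  case 0
  assume "x < N"
  then have "N - 1 < N" by simp
  then have "(x + N - 1) mod N = N - 1" using 0 by simp
  then show ?thesis using 0 \<open>x < N\<close> by simp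
next
  case (Suc m)
  assume "x < N"
  then have "x + N - 1 = m + N" using Suc by simp
  then have "(x + N - 1) mod N = m" using Suc \<open>x < N\<close> by simp
  then show ?thesis using Suc \<open>x < N\<close> by simp
qed

lemma proj_lists: "proj \<Gamma> w \<in> lists \<Gamma>"
  unfolding proj_def by auto

lemma count_proj: "count_list (proj \<Gamma> w) a = (if a \<in> \<Gamma> then count_list w a else 0)"
  unfolding proj_def by (simp add: count_filter)

lemma commutative_part:
  assumes "commutative_lang L" "L \<subseteq> lists \<Sigma>"
  shows "commutative_lang (proj \<Gamma> ` L)"
  unfolding commutative_lang_def
proof (intro ballI allI impI)
  fix w' u assume "w' \<in> proj \<Gamma> ` L" and cu: "\<forall>a. count_list u a = count_list w' a"
  then obtain w where w: "w \<in> L" "w' = proj \<Gamma> w" by blast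
  have uG: "set u \<subseteq> \<Gamma>"
  proof
    fix a assume "a \<in> set u"
    then have "count_list u a \<noteq> 0" by (simp add: count_list_0_iff)
    then show "a \<in> \<Gamma>" using cu w count_proj by metis
  qed
  define v where "v = u @ filter (\<lambda>x. x \<notin> \<Gamma>) w"
  have "\<forall>a. count_list v a = count_list w a"
  proof
    fix a show "count_list v a = count_list w a"
      using cu w uG by (cases "a \<in> \<Gamma>") (auto simp: v_def count_filter count_proj)
  qed
  then have "v \<in> L" using assms(1) w unfolding commutative_lang_def by blast
  moreover have "proj \<Gamma> v = u" unfolding v_def proj_def using uG
    by (auto simp: filter_id_conv)
  ultimately show "u \<in> proj \<Gamma> ` L" by (metis image_eqI)
qed

theorem mainTheorem6:
  fixes \<Sigma> :: "'a set" and L :: "'a list set"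
  assumes "finite \<Sigma>" and "\<Sigma> \<noteq> {}"
    and "commutative_lang L" and "group_lang \<Sigma> L"
    and "\<Gamma> \<subseteq> \<Sigma>"
  shows "commutative_lang (proj \<Gamma> ` L) \<and> group_lang \<Gamma> (proj \<Gamma> ` L)"
proof -
  obtain Q \<delta> q0 F where pa: "perm_automaton \<Sigma> Q \<delta> q0 F" and Ld: "L = accepted_lang \<Sigma> \<delta> q0 F"
    using assms(2,4) unfolding group_lang_def by auto
  have Ll: "L \<subseteq> lists \<Sigma>" unfolding Ld accepted_lang_def by auto
  have c: "commutative_lang (proj \<Gamma> ` L)" using commutative_part[OF assms(3) Ll] .
  have g: "group_lang \<Gamma> (proj \<Gamma> ` L)"
  proof (cases "\<Gamma> = {}")
    case True
    then have "proj \<Gamma> ` L \<subseteq> {[]}" unfolding proj_def by auto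
    then have "proj \<Gamma> ` L = {} \<or> proj \<Gamma> ` L = {[]}" by (simp add: subset_singleton_iff)
    then show ?thesis unfolding group_lang_def using True by simp
  next
    case False
    have finQ: "finite Q" and bij: "\<forall>a\<in>\<Sigma>. bij_betw (\<lambda>q. \<delta> q a) Q Q"
      using pa unfolding perm_automaton_def by auto
    obtain N where N: "N > 0" and per: "\<forall>a\<in>\<Sigma>. \<forall>q\<in>Q. ((\<lambda>q. \<delta> q a) ^^ N) q = q"
      using period_all[OF finQ assms(1) bij] by blast
    define Q' where "Q' = {f :: 'a \<Rightarrow> nat. (\<forall>a. a \<notin> \<Gamma> \<longrightarrow> f a = 0) \<and> (\<forall>a. f a < N)}"
    define \<delta>' where "\<delta>' = (\<lambda>(f :: 'a \<Rightarrow> nat) a. f(a := Suc (f a) mod N))"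
    define F' where "F' = {f \<in> Q'. \<exists>w\<in>L. \<forall>a\<in>\<Gamma>. count_list w a mod N = f a}"
    have finG: "finite \<Gamma>" using assms(1,5) finite_subset by blast
    have "Q' \<subseteq> (\<lambda>g a. if a \<in> \<Gamma> then g a else 0) ` (PiE \<Gamma> (\<lambda>_. {..<N}))"
    proof
      fix f assume f: "f \<in> Q'"
      have "f = (\<lambda>a. if a \<in> \<Gamma> then restrict f \<Gamma> a else 0)" using f unfolding Q'_def by auto
      moreover have "restrict f \<Gamma> \<in> PiE \<Gamma> (\<lambda>_. {..<N})" using f unfolding Q'_def by auto
      ultimately show "f \<in> (\<lambda>g a. if a \<in> \<Gamma> then g a else 0) ` (PiE \<Gamma> (\<lambda>_. {..<N}))" by (rule image_eqI)
    qed
    moreover have "finite ((\<lambda>g a. if a \<in> \<Gamma> then g a else 0) ` (PiE \<Gamma> (\<lambda>_. {..<N})))"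
      by (rule finite_imageI) (simp add: finite_PiE finG)
    ultimately have finQ': "finite Q'" by (rule finite_subset)
    have q0': "(\<lambda>_. 0) \<in> Q'" unfolding Q'_def using N by auto
    have F': "F' \<subseteq> Q'" unfolding F'_def by auto
    have bij': "\<forall>a\<in>\<Gamma>. bij_betw (\<lambda>q. \<delta>' q a) Q' Q'"
    proof
      fix a assume a: "a \<in> \<Gamma>"
      show "bij_betw (\<lambda>q. \<delta>' q a) Q' Q'"
      proof (rule bij_betwI[where g = "\<lambda>f. f(a := (f a + N - 1) mod N)"])
        show "(\<lambda>q. \<delta>' q a) \<in> Q' \<rightarrow> Q'" using a N unfolding Q'_def \<delta>'_def by auto
        show "(\<lambda>f. f(a := (f a + N - 1) mod N)) \<in> Q' \<rightarrow> Q'" using a N unfolding Q'_def by auto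
        show "\<And>x. x \<in> Q' \<Longrightarrow> (\<delta>' x a)(a := (\<delta>' x a a + N - 1) mod N) = x"
          unfolding Q'_def \<delta>'_def using mod_inv1 by fastforce
        show "\<And>y. y \<in> Q' \<Longrightarrow> \<delta>' (y(a := (y a + N - 1) mod N)) a = y"
          unfolding Q'_def \<delta>'_def using mod_inv2 by fastforce
      qed
    qed
    have fl: "\<And>f u. f \<in> Q' \<Longrightarrow> u \<in> lists \<Gamma> \<Longrightarrow>
        foldl \<delta>' f u = (\<lambda>a. if a \<in> \<Gamma> then (f a + count_list u a) mod N else 0)"
    proof -
      fix f u assume "f \<in> Q'" "u \<in> lists \<Gamma>"
      then show "foldl \<delta>' f u = (\<lambda>a. if a \<in> \<Gamma> then (f a + count_list u a) mod N else 0)"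
      proof (induction u arbitrary: f)
        case Nil then show ?case unfolding Q'_def by auto
      next
        case (Cons b u)
        have "\<delta>' f b \<in> Q'" using bij' Cons.prems bij_betwE by fastforce
        then have "foldl \<delta>' (\<delta>' f b) u = (\<lambda>a. if a \<in> \<Gamma> then (\<delta>' f b a + count_list u a) mod N else 0)"
          using Cons by simp
        moreover have "(\<lambda>a. if a \<in> \<Gamma> then (\<delta>' f b a + count_list u a) mod N else 0)
            = (\<lambda>a. if a \<in> \<Gamma> then (f a + count_list (b # u) a) mod N else 0)"
        proof
          fix a show "(if a \<in> \<Gamma> then (\<delta>' f b a + count_list u a) mod N else 0)
            = (if a \<in> \<Gamma> then (f a + count_list (b # u) a) mod N else 0)"
            unfolding \<delta>'_def by (cases "a = b") (simp_all add: mod_add_left_eq)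
        qed
        ultimately show ?case by simp
      qed
    qed
    obtain Q2 \<delta>2 q02 F2 where pa2: "perm_automaton \<Gamma> Q2 \<delta>2 q02 F2"
      and acc2: "accepted_lang \<Gamma> \<delta>2 q02 F2 = {w \<in> lists \<Gamma>. foldl \<delta>' (\<lambda>_. 0) w \<in> F'}"
      using transfer_nat[OF finQ' q0' F' bij'] by blast
    have "{w \<in> lists \<Gamma>. foldl \<delta>' (\<lambda>_. 0) w \<in> F'} = proj \<Gamma> ` L"
    proof (intro set_eqI iffI)
      fix u assume "u \<in> {w \<in> lists \<Gamma>. foldl \<delta>' (\<lambda>_. 0) w \<in> F'}"
      then have u: "u \<in> lists \<Gamma>" and "foldl \<delta>' (\<lambda>_. 0) u \<in> F'" by auto
      then obtain w where w: "w \<in> L" and cw: "\<forall>a\<in>\<Gamma>. count_list w a mod N = count_list u a mod N"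
        unfolding F'_def using fl[OF q0' u] by auto
      define v where "v = u @ filter (\<lambda>x. x \<notin> \<Gamma>) w"
      have vl: "v \<in> lists \<Sigma>" unfolding v_def using u w Ll assms(5) by auto
      have "\<forall>a. count_list v a mod N = count_list w a mod N"
      proof
        fix a show "count_list v a mod N = count_list w a mod N"
        proof (cases "a \<in> \<Gamma>")
          case True then show ?thesis using cw by (simp add: v_def count_filter)
        next
          case False then have "a \<notin> set u" using u by auto
          then show ?thesis using False by (simp add: v_def count_filter)
        qed
      qed
      then have "v \<in> L" using key[OF pa assms(1) per _ _ vl] assms(3) w unfolding Ld by blast
      moreover have "proj \<Gamma> v = u" unfolding v_def proj_def using u
        by (auto simp: filter_id_conv)
      ultimately show "u \<in> proj \<Gamma> ` L" by (metis image_eqI)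
    next
      fix u assume "u \<in> proj \<Gamma> ` L"
      then obtain w where w: "w \<in> L" "u = proj \<Gamma> w" by blast
      have u: "u \<in> lists \<Gamma>" unfolding w(2) by (rule proj_lists)
      have "foldl \<delta>' (\<lambda>_. 0) u \<in> Q'" using foldl_in[OF bij' q0' u] .
      moreover have "\<forall>a\<in>\<Gamma>. count_list w a mod N = foldl \<delta>' (\<lambda>_. 0) u a"
        using fl[OF q0' u] w by (simp add: count_proj)
      ultimately show "u \<in> {w \<in> lists \<Gamma>. foldl \<delta>' (\<lambda>_. 0) w \<in> F'}"
        using u w unfolding F'_def by blast
    qed
    then have e: "proj \<Gamma> ` L = accepted_lang \<Gamma> \<delta>2 q02 F2" using acc2 by simp
    have "\<exists>Q \<delta> q0 F. perm_automaton \<Gamma> Q \<delta> q0 F \<and> proj \<Gamma> ` L = accepted_lang \<Gamma> \<delta> q0 F"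
      using pa2 e by blast
    then show ?thesis unfolding group_lang_def using False by simp
  qed
  show ?thesis using c g by blast
qed

end
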